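(* Let $\alpha\in(0,1]$ and let $n$ be such that $n^\alpha=2^q$ for a positive integer $q$. Let $R\subset\mathrm{conv}(A_n)$ be an open axis-aligned rectangle such that either [$w(R)>1$ and $h(R)>n^\alpha$] or [$w(R)>n^\alpha$ and $h(R)>1$]. Then $R$ contains a point of $B_n$ lying on a forward diagonal and a point of $B_n$ lying on a backward diagonal.
   Context: Let $A_n=\{(i,j)\in\mathbb{Z}^2: 0\le i,j\le 14n\}$, so $\mathrm{conv}(A_n)=[0,14n]^2$. The sparse grid $B_n\subseteq A_n$ is the set of points of $A_n$ of at least one of the following forms: (1) $(i,j)$ with $n^\alpha \mid ij$; (2) $(i+k,j+k)$ with $n^\alpha\mid i$, $n^\alpha\mid j$, $k\in\{1,\dots,n^\alpha\}$; (3) $(i+k,j-k)$ with $n^\alpha\mid i$, $n^\alpha\mid j$, $k\in\{1,\dots,n^\alpha\}$. A point of $A_n$ of form (2) is said to lie on a forward diagonal, and a point of $A_n$ of form (3) on a backward diagonal. For an open rectangle $R=(x_1,x_2)\times(y_1,y_2)$, $w(R)=x_2-x_1$ and $h(R)=y_2-y_1$. *)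

theory Defs
  imports Complex_Main
begin

definition gridA :: "nat \<Rightarrow> (int \<times> int) set" where
  "gridA n = {(i, j). 0 \<le> i \<and> i \<le> 14 * int n \<and> 0 \<le> j \<and> j \<le> 14 * int n}"

text \<open>Points of A_n on a forward diagonal; N plays the role of the integer n^alpha.\<close>
definition fwd_diag :: "nat \<Rightarrow> nat \<Rightarrow> (int \<times> int) set" where
  "fwd_diag N n = {p \<in> gridA n. \<exists>i j k. int N dvd i \<and> int N dvd j \<and> k \<in> {1..int N}
                                     \<and> p = (i + k, j + k)}"

definition bwd_diag :: "nat \<Rightarrow> nat \<Rightarrow> (int \<times> int) set" where
  "bwd_diag N n = {p \<in> gridA n. \<exists>i j k. int N dvd i \<and> int N dvd j \<and> k \<in> {1..int N}
                                     \<and> p = (i + k, j - k)}"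

definition sparseB :: "nat \<Rightarrow> nat \<Rightarrow> (int \<times> int) set" where
  "sparseB N n = {p \<in> gridA n. int N dvd (fst p * snd p)} \<union> fwd_diag N n \<union> bwd_diag N n"

definition to_real_pt :: "int \<times> int \<Rightarrow> real \<times> real" where
  "to_real_pt p = (real_of_int (fst p), real_of_int (snd p))"

end

theory Submission
  imports Defs
begin

lemma exists_cong:
  fixes u v :: real and N c :: int
  assumes "N \<ge> 1" "v - u > N"
  shows "\<exists>t::int. u < t \<and> t < v \<and> N dvd (t - c)"
proof -
  define t where "t = floor u + 1 + ((c - floor u - 1) mod N)"
  have m0: "0 \<le> (c - floor u - 1) mod N" "(c - floor u - 1) mod N < N" using assms by auto
  have "u < t" using m0 unfolding t_def by linarith
  moreover have "t < v" using m0 assms unfolding t_def by linarith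
  moreover have "N dvd (t - c)"
  proof -
    have "t - c = (c - floor u - 1) mod N - (c - floor u - 1)" unfolding t_def by simp
    also have "\<dots> = - (N * ((c - floor u - 1) div N))"
      using div_mult_mod_eq[of "c - floor u - 1" N] by (simp add: algebra_simps)
    finally show ?thesis by simp
  qed
  ultimately show ?thesis by blast
qed

lemma fwd_mem:
  assumes "N \<ge> 1" "(a,b) \<in> gridA n" "int N dvd (a - b)"
  shows "(a,b) \<in> fwd_diag N n"
proof -
  define k where "k = (a - 1) mod int N + 1"
  define i where "i = a - k"
  have "int N > 0" using assms(1) by simp
  hence "(a - 1) mod int N < int N" "0 \<le> (a - 1) mod int N" by simp_all
  hence ki: "k \<in> {1..int N}" unfolding k_def by auto
  have "i = int N * ((a - 1) div int N)" unfolding i_def k_def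
    using mult_div_mod_eq[of "int N" "a - 1"] by linarith
  hence di: "int N dvd i" by simp
  have "b - k = i - (a - b)" unfolding i_def by simp
  moreover have "int N dvd (i - (a - b))" using di assms(3) by (rule dvd_diff)
  ultimately have dj: "int N dvd (b - k)" by metis
  have e: "(a,b) = (i + k, (b - k) + k)" by (simp add: i_def)
  show ?thesis unfolding fwd_diag_def using assms(2) ki di dj e by blast
qed

lemma bwd_mem:
  assumes "N \<ge> 1" "(a,b) \<in> gridA n" "int N dvd (a + b)"
  shows "(a,b) \<in> bwd_diag N n"
proof -
  define k where "k = (a - 1) mod int N + 1"
  define i where "i = a - k"
  have "int N > 0" using assms(1) by simp
  hence "(a - 1) mod int N < int N" "0 \<le> (a - 1) mod int N" by simp_all
  hence ki: "k \<in> {1..int N}" unfolding k_def by auto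
  have "i = int N * ((a - 1) div int N)" unfolding i_def k_def
    using mult_div_mod_eq[of "int N" "a - 1"] by linarith
  hence di: "int N dvd i" by simp
  have "b + k = (a + b) - i" unfolding i_def by simp
  moreover have "int N dvd ((a + b) - i)" using assms(3) di by (rule dvd_diff)
  ultimately have dj: "int N dvd (b + k)" by metis
  have e: "(a,b) = (i + k, (b + k) - k)" by (simp add: i_def)
  show ?thesis unfolding bwd_diag_def using assms(2) ki di dj e by blast
qed

lemma grid_mem:
  assumes "{x1<..<x2} \<times> {y1<..<y2} \<subseteq> {0..14 * real n} \<times> {0..14 * real n}"
    and "x1 < real_of_int a" "real_of_int a < x2" "y1 < real_of_int b" "real_of_int b < y2"
  shows "(a,b) \<in> gridA n" "to_real_pt (a,b) \<in> {x1<..<x2} \<times> {y1<..<y2}"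
proof -
  have "(real_of_int a, real_of_int b) \<in> {0..14 * real n} \<times> {0..14 * real n}"
    using assms(1) subsetD[OF assms(1), of "(real_of_int a, real_of_int b)"] assms(2-5) by simp
  hence "0 \<le> real_of_int a" "real_of_int a \<le> 14 * real n" "0 \<le> real_of_int b" "real_of_int b \<le> 14 * real n"
    by auto
  hence "0 \<le> a" "a \<le> 14 * int n" "0 \<le> b" "b \<le> 14 * int n" by linarith+
  thus "(a,b) \<in> gridA n" unfolding gridA_def by auto
  show "to_real_pt (a,b) \<in> {x1<..<x2} \<times> {y1<..<y2}" using assms unfolding to_real_pt_def by auto
qed

theorem lemma5:
  fixes \<alpha> :: real and n q :: nat and x1 x2 y1 y2 :: real
  assumes "0 < \<alpha>" and "\<alpha> \<le> 1"
    and "q \<ge> 1" and "real n powr \<alpha> = 2 ^ q"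
    and "x1 < x2" and "y1 < y2"
    and "{x1<..<x2} \<times> {y1<..<y2} \<subseteq> {0..14 * real n} \<times> {0..14 * real n}"
    and "(x2 - x1 > 1 \<and> y2 - y1 > real n powr \<alpha>) \<or> (x2 - x1 > real n powr \<alpha> \<and> y2 - y1 > 1)"
  shows "(\<exists>p \<in> sparseB (2 ^ q) n. p \<in> fwd_diag (2 ^ q) n \<and>
             to_real_pt p \<in> {x1<..<x2} \<times> {y1<..<y2}) \<and>
         (\<exists>p \<in> sparseB (2 ^ q) n. p \<in> bwd_diag (2 ^ q) n \<and>
             to_real_pt p \<in> {x1<..<x2} \<times> {y1<..<y2})"
proof -
  define N :: nat where "N = 2 ^ q"
  have N1: "N \<ge> 1" unfolding N_def by simp
  have NN: "real_of_int (int N) = real n powr \<alpha>" using assms(4) unfolding N_def by simp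
  have N1i: "int N \<ge> 1" using N1 by simp
  have key: "\<exists>a b. x1 < real_of_int a \<and> real_of_int a < x2 \<and> y1 < real_of_int b \<and> real_of_int b < y2
              \<and> int N dvd (a - b)"
   and key2: "\<exists>a b. x1 < real_of_int a \<and> real_of_int a < x2 \<and> y1 < real_of_int b \<and> real_of_int b < y2
              \<and> int N dvd (a + b)"
  proof -
    have "(\<exists>a b. x1 < real_of_int a \<and> real_of_int a < x2 \<and> y1 < real_of_int b \<and> real_of_int b < y2
              \<and> int N dvd (a - b)) \<and> (\<exists>a b. x1 < real_of_int a \<and> real_of_int a < x2 \<and> y1 < real_of_int b \<and> real_of_int b < y2
              \<and> int N dvd (a + b))"
      using assms(8)
    proof
      assume h: "x2 - x1 > 1 \<and> y2 - y1 > real n powr \<alpha>"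
      define a where "a = floor x1 + 1"
      have a1: "x1 < real_of_int a" "real_of_int a < x2" using h unfolding a_def by linarith+
      obtain b where b: "y1 < b" "b < y2" "int N dvd (b - a)"
        using exists_cong[OF N1i, of y2 y1 a] h NN by auto
      obtain b' where b': "y1 < b'" "b' < y2" "int N dvd (b' - (-a))"
        using exists_cong[OF N1i, of y2 y1 "-a"] h NN by auto
      have "int N dvd (a - b)" using b(3) by (metis dvd_diff_commute)
      moreover have "int N dvd (a + b')" using b'(3) by (simp add: add.commute)
      ultimately show ?thesis using a1 b b' by blast
    next
      assume h: "x2 - x1 > real n powr \<alpha> \<and> y2 - y1 > 1"
      define b where "b = floor y1 + 1"
      have b1: "y1 < real_of_int b" "real_of_int b < y2" using h unfolding b_def by linarith+
      obtain a where a: "x1 < a" "a < x2" "int N dvd (a - b)"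
        using exists_cong[OF N1i, of x2 x1 b] h NN by auto
      obtain a' where a': "x1 < a'" "a' < x2" "int N dvd (a' - (-b))"
        using exists_cong[OF N1i, of x2 x1 "-b"] h NN by auto
      have "int N dvd (a' + b)" using a'(3) by simp
      thus ?thesis using a a' b1 by blast
    qed
    thus "\<exists>a b. x1 < real_of_int a \<and> real_of_int a < x2 \<and> y1 < real_of_int b \<and> real_of_int b < y2
              \<and> int N dvd (a - b)" "\<exists>a b. x1 < real_of_int a \<and> real_of_int a < x2 \<and> y1 < real_of_int b \<and> real_of_int b < y2
              \<and> int N dvd (a + b)" by blast+
  qed
  obtain a b where ab: "x1 < real_of_int a" "real_of_int a < x2" "y1 < real_of_int b" "real_of_int b < y2"
    "int N dvd (a - b)" using key by blast
  obtain c d where cd: "x1 < real_of_int c" "real_of_int c < x2" "y1 < real_of_int d" "real_of_int d < y2"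
    "int N dvd (c + d)" using key2 by blast
  note g1 = grid_mem[OF assms(7) ab(1-4)]
  note g2 = grid_mem[OF assms(7) cd(1-4)]
  have f: "(a,b) \<in> fwd_diag N n" using fwd_mem[OF N1 g1(1) ab(5)] .
  have bw: "(c,d) \<in> bwd_diag N n" using bwd_mem[OF N1 g2(1) cd(5)] .
  have "(a,b) \<in> sparseB N n" "(c,d) \<in> sparseB N n" unfolding sparseB_def using f bw by blast+
  hence "\<exists>p \<in> sparseB N n. p \<in> fwd_diag N n \<and> to_real_pt p \<in> {x1<..<x2} \<times> {y1<..<y2}"
     "\<exists>p \<in> sparseB N n. p \<in> bwd_diag N n \<and> to_real_pt p \<in> {x1<..<x2} \<times> {y1<..<y2}"
    using f bw g1(2) g2(2) by (meson bexI)+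
  thus ?thesis unfolding N_def by blast
qed

end
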